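(* Let $I_n$ denote the number of inversion sequences of length $n$ avoiding all of the patterns $010,101,120,201,210$ (with $I_0=1$). Define the power series $$X_1=\frac{2+z-\sqrt5\,z-\sqrt{4-4(3+\sqrt5)z-2(\sqrt5-3)z^2}}{4z}=1+\tfrac12(1+\sqrt5)z+(2+\sqrt5)z^2+\cdots,$$ $$X_3=\frac{2+z+\sqrt5\,z-\sqrt{4+4(\sqrt5-3)z+2(3+\sqrt5)z^2}}{4z}=1+\tfrac12(1-\sqrt5)z+(2-\sqrt5)z^2+\cdots$$ (square roots being the power series with constant term $2$); these are the two power series roots in $x$ of $z^2x^4-z^2x^3-2zx^3-z^2x^2+3zx^2+x^2-zx-2x+1$. Then $$\sum_{n\ge0}I_nz^n=-\frac{X_1z+X_3z-1}{X_1X_3z^2-X_1z-X_3z-z+1}=1+z+2z^2+5z^3+15z^4+51z^5+188z^6+733z^7+\cdots.$$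
   Context: An inversion sequence of length $n$ is an integer sequence $(a_1,\dots,a_n)$ with $0\le a_i<i$ for all $i$. A pattern is a sequence $\sigma$ of non-negative integers containing every value from $0$ to $\max(\sigma)$; the reduction of a sequence replaces its smallest values by $0$, the next smallest by $1$, etc. A sequence $a$ contains $\sigma$ if some (not necessarily consecutive) subsequence of $a$ has reduction $\sigma$; otherwise $a$ avoids $\sigma$. Equivalently, these are the inversion sequences with no $i<j<k$ such that $a_i\ne a_j$, $a_j\ne a_k$ and $a_i\ge a_k$. *)

theory Defs
  imports Complex_Main "HOL-Library.Sublist" "HOL-Computational_Algebra.Formal_Power_Series"
begin

text \<open>Inversion sequences, stored 0-indexed: position i (0-based) corresponds to a_{i+1},
  so the condition 0 <= a_{i+1} < i+1 becomes a!i <= i.\<close>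
definition inversion_seq :: "nat \<Rightarrow> nat list \<Rightarrow> bool" where
  "inversion_seq n a \<longleftrightarrow> length a = n \<and> (\<forall>i<n. a ! i < Suc i)"

definition reduction :: "nat list \<Rightarrow> nat list" where
  "reduction xs = map (\<lambda>x. card {y \<in> set xs. y < x}) xs"

definition contains_pattern :: "nat list \<Rightarrow> nat list \<Rightarrow> bool" where
  "contains_pattern a \<sigma> \<longleftrightarrow> (\<exists>ys. subseq ys a \<and> reduction ys = \<sigma>)"

definition avoids :: "nat list \<Rightarrow> nat list \<Rightarrow> bool" where
  "avoids a \<sigma> \<longleftrightarrow> \<not> contains_pattern a \<sigma>"

definition I_count :: "nat \<Rightarrow> nat" where
  "I_count n = card {a. inversion_seq n a \<and>
      (\<forall>\<sigma>\<in>{[0,1,0],[1,0,1],[1,2,0],[2,0,1],[2,1,0]}. avoids a \<sigma>)}"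

definition fps_sqrt2 :: "real fps \<Rightarrow> real fps" where
  "fps_sqrt2 A = (THE S. S ^ 2 = A \<and> fps_nth S 0 = 2)"

definition X1 :: "real fps" where
  "X1 = fps_shift 1 (fps_const 2 + fps_const (1 - sqrt 5) * fps_X
        - fps_sqrt2 (fps_const 4 - fps_const (4 * (3 + sqrt 5)) * fps_X
                     - fps_const (2 * (sqrt 5 - 3)) * fps_X ^ 2)) / fps_const 4"

definition X3 :: "real fps" where
  "X3 = fps_shift 1 (fps_const 2 + fps_const (1 + sqrt 5) * fps_X
        - fps_sqrt2 (fps_const 4 + fps_const (4 * (sqrt 5 - 3)) * fps_X
                     + fps_const (2 * (3 + sqrt 5)) * fps_X ^ 2)) / fps_const 4"

end

theory Submission
  imports Defs
begin

unbundle fps_syntax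


definition pats :: "nat list set" where
  "pats = {[0,1,0],[1,0,1],[1,2,0],[2,0,1],[2,1,0]}"

definition valid :: "nat list \<Rightarrow> bool" where
  "valid a \<longleftrightarrow> (\<forall>i<length a. a!i < Suc i) \<and> (\<forall>\<sigma>\<in>pats. avoids a \<sigma>)"

definition okx :: "nat list \<Rightarrow> nat \<Rightarrow> bool" where
  "okx w y \<longleftrightarrow> \<not>(\<exists>x1 x2. subseq [x1,x2] w \<and> x1 \<noteq> x2 \<and> x2 \<noteq> y \<and> y \<le> x1)"

lemma length_reduction[simp]: "length (reduction xs) = length xs"
  by (simp add: reduction_def)

lemma card_filter3: "card {v \<in> set xs. v < t} = length (remdups (filter (\<lambda>v. v < t) xs))"
proof -
  have "{v \<in> set xs. v < t} = set (filter (\<lambda>v. v < t) xs)" by auto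
  thus ?thesis by (simp add: length_remdups_card_conv)
qed

lemma red3: "reduction [x,y,z] \<in> pats \<longleftrightarrow> x \<noteq> y \<and> y \<noteq> z \<and> z \<le> x"
  unfolding reduction_def pats_def card_filter3
  by (cases x y rule: linorder_cases; cases y z rule: linorder_cases; cases x z rule: linorder_cases) auto

lemma subseq_snoc_iff: "subseq ys (w@[y]) \<longleftrightarrow> subseq ys w \<or> (\<exists>ys'. ys = ys'@[y] \<and> subseq ys' w)"
proof
  assume "subseq ys (w@[y])"
  then obtain xs1 xs2 where "ys = xs1 @ xs2" "subseq xs1 w" "subseq xs2 [y]"
    by (auto simp: subseq_append_iff)
  moreover have "xs2 = [] \<or> xs2 = [y]" using \<open>subseq xs2 [y]\<close>
    by (cases xs2) (auto split: if_splits)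
  ultimately show "subseq ys w \<or> (\<exists>ys'. ys = ys'@[y] \<and> subseq ys' w)" by auto
next
  assume "subseq ys w \<or> (\<exists>ys'. ys = ys'@[y] \<and> subseq ys' w)"
  thus "subseq ys (w@[y])"
    by (auto simp: subseq_append_iff)
qed

lemma contains_snoc: "contains_pattern (w@[y]) \<sigma> \<longleftrightarrow>
   contains_pattern w \<sigma> \<or> (\<exists>ys. subseq ys w \<and> reduction (ys@[y]) = \<sigma>)"
  unfolding contains_pattern_def subseq_snoc_iff by auto

lemma len3_pats: "\<sigma> \<in> pats \<Longrightarrow> length \<sigma> = 3"
  by (auto simp: pats_def)

lemma snoc_pats_iff: "(\<exists>\<sigma>\<in>pats. \<exists>ys. subseq ys w \<and> reduction (ys@[y]) = \<sigma>) \<longleftrightarrow> \<not> okx w y"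
proof
  assume "\<exists>\<sigma>\<in>pats. \<exists>ys. subseq ys w \<and> reduction (ys@[y]) = \<sigma>"
  then obtain \<sigma> ys where s: "\<sigma>\<in>pats" "subseq ys w" "reduction (ys@[y]) = \<sigma>" by blast
  hence "length ys = 2" using len3_pats[OF s(1)] length_reduction[of "ys@[y]"] by simp
  then obtain x1 x2 where "ys = [x1,x2]"
    by (metis One_nat_def Suc_1 length_0_conv length_Suc_conv)
  with s red3[of x1 x2 y] show "\<not> okx w y" by (auto simp: okx_def)
next
  assume "\<not> okx w y"
  then obtain x1 x2 where "subseq [x1,x2] w" "x1 \<noteq> x2 \<and> x2 \<noteq> y \<and> y \<le> x1"
    by (auto simp: okx_def)
  thus "\<exists>\<sigma>\<in>pats. \<exists>ys. subseq ys w \<and> reduction (ys@[y]) = \<sigma>"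
    using red3[of x1 x2 y] by (intro bexI[of _ "reduction [x1,x2,y]"]) auto
qed

lemma valid_Nil[simp]: "valid []"
  by (auto simp: valid_def avoids_def contains_pattern_def pats_def reduction_def)

lemma valid_snoc: "valid (w@[y]) \<longleftrightarrow> valid w \<and> y \<le> length w \<and> okx w y"
proof -
  have inv: "(\<forall>i<length (w@[y]). (w@[y])!i < Suc i) \<longleftrightarrow> (\<forall>i<length w. w!i < Suc i) \<and> y \<le> length w"
    by (auto simp: nth_append less_Suc_eq)
  have pat: "(\<forall>\<sigma>\<in>pats. avoids (w@[y]) \<sigma>) \<longleftrightarrow> (\<forall>\<sigma>\<in>pats. avoids w \<sigma>) \<and> okx w y"
    using snoc_pats_iff[of w y] unfolding avoids_def contains_snoc by blast
  show ?thesis unfolding valid_def inv pat by blast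
qed

lemma valid_bound: "valid w \<Longrightarrow> x \<in> set w \<Longrightarrow> x < length w"
  by (auto simp: valid_def in_set_conv_nth)



definition S0 :: "nat list \<Rightarrow> nat list \<Rightarrow> nat \<Rightarrow> nat \<Rightarrow> bool" where
  "S0 w u t M \<longleftrightarrow> w = u @ replicate t M \<and> 0 < t \<and> (\<forall>x\<in>set u. x < M)"

definition S1 :: "nat list \<Rightarrow> nat list \<Rightarrow> nat \<Rightarrow> nat \<Rightarrow> nat \<Rightarrow> nat \<Rightarrow> bool" where
  "S1 w u s M t v \<longleftrightarrow> w = u @ replicate s M @ replicate t v \<and> 0 < s \<and> 0 < t \<and> v < M \<and> (\<forall>x\<in>set u. x < v)"

lemma subseq2_append: "subseq [x1,x2] (u@v) \<longleftrightarrow>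
   subseq [x1,x2] u \<or> (x1 \<in> set u \<and> x2 \<in> set v) \<or> subseq [x1,x2] v"
proof
  assume "subseq [x1,x2] (u@v)"
  then obtain xs1 xs2 where h: "[x1,x2] = xs1 @ xs2" "subseq xs1 u" "subseq xs2 v"
    by (auto simp: subseq_append_iff)
  have tk: "xs1 = take (length xs1) [x1,x2]" "xs2 = drop (length xs1) [x1,x2]"
    using h(1) by (metis append_eq_conv_conj)+
  have "length xs1 \<le> 2" using h(1) by (metis le_add1 length_append length_Cons list.size(3) numeral_2_eq_2)
  hence "length xs1 = 0 \<or> length xs1 = 1 \<or> length xs1 = 2" by linarith
  then consider "xs1 = []" "xs2 = [x1,x2]" | "xs1 = [x1]" "xs2 = [x2]" | "xs1 = [x1,x2]" "xs2 = []"
    using tk by (smt (verit) One_nat_def Suc_1 drop0 drop_Suc_Cons drop_all order_refl length_Cons list.size(3) take0 take_Suc_Cons take_all)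
  thus "subseq [x1,x2] u \<or> (x1 \<in> set u \<and> x2 \<in> set v) \<or> subseq [x1,x2] v"
    using h by cases (auto simp: subseq_singleton_left)
next
  assume "subseq [x1,x2] u \<or> (x1 \<in> set u \<and> x2 \<in> set v) \<or> subseq [x1,x2] v"
  thus "subseq [x1,x2] (u@v)"
  proof (elim disjE)
    assume "x1 \<in> set u \<and> x2 \<in> set v"
    hence "subseq [x1] u" "subseq [x2] v" by (auto simp: subseq_singleton_left)
    thus ?thesis using list_emb_append_mono[of "(=)" "[x1]" u "[x2]" v] by simp
  qed auto
qed

lemma subseq_set: "subseq xs ys \<Longrightarrow> x \<in> set xs \<Longrightarrow> x \<in> set ys"
  using list_emb_set[of "(=)" xs ys x] by auto

lemma subseq2_rep: "subseq [x1,x2] (replicate t M) \<Longrightarrow> x1 = M \<and> x2 = M"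
  using subseq_set[of "[x1,x2]" "replicate t M"] by auto

lemma ok_S0: assumes "S0 w u t M" shows "okx w y \<longleftrightarrow> (M \<le> y \<or> (\<forall>x\<in>set u. x < y))"
proof
  assume ok: "okx w y"
  show "M \<le> y \<or> (\<forall>x\<in>set u. x < y)"
  proof (rule ccontr)
    assume "\<not> (M \<le> y \<or> (\<forall>x\<in>set u. x < y))"
    then obtain x where x: "x \<in> set u" "y \<le> x" "y < M" by auto
    have "x < M" using x assms by (auto simp: S0_def)
    have "subseq [x, M] w" using assms x by (auto simp: S0_def subseq2_append)
    hence "\<exists>x1 x2. subseq [x1,x2] w \<and> x1 \<noteq> x2 \<and> x2 \<noteq> y \<and> y \<le> x1"
      using x \<open>x < M\<close> by (intro exI[of _ x] exI[of _ M]) auto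
    thus False using ok by (simp add: okx_def)
  qed
next
  assume h: "M \<le> y \<or> (\<forall>x\<in>set u. x < y)"
  show "okx w y" unfolding okx_def
  proof
    assume "\<exists>x1 x2. subseq [x1,x2] w \<and> x1 \<noteq> x2 \<and> x2 \<noteq> y \<and> y \<le> x1"
    then obtain x1 x2 where b: "subseq [x1,x2] w" "x1 \<noteq> x2" "x2 \<noteq> y" "y \<le> x1" by blast
    have w: "w = u @ replicate t M" "\<forall>x\<in>set u. x < M" using assms by (auto simp: S0_def)
    from b(1) w(1) have "subseq [x1,x2] u \<or> x1 \<in> set u \<or> subseq [x1,x2] (replicate t M)"
      by (auto simp: subseq2_append)
    moreover have "subseq [x1,x2] u \<Longrightarrow> x1 \<in> set u" using subseq_set by fastforce
    moreover have "\<not> subseq [x1,x2] (replicate t M)" using subseq2_rep b(2) by metis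
    ultimately have "x1 \<in> set u" by blast
    hence "x1 < M" "M \<le> y \<or> x1 < y" using w(2) h by auto
    thus False using b(4) by linarith
  qed
qed

lemma ok_S1: assumes "S1 w u s M t v" shows "okx w y \<longleftrightarrow> (M < y \<or> y = v)"
proof
  assume ok: "okx w y"
  show "M < y \<or> y = v"
  proof (rule ccontr)
    assume c: "\<not> (M < y \<or> y = v)"
    have "subseq [M, v] w" using assms by (auto simp: S1_def subseq2_append)
    hence "\<exists>x1 x2. subseq [x1,x2] w \<and> x1 \<noteq> x2 \<and> x2 \<noteq> y \<and> y \<le> x1"
      using c assms by (intro exI[of _ M] exI[of _ v]) (auto simp: S1_def)
    thus False using ok by (simp add: okx_def)
  qed
next
  assume h: "M < y \<or> y = v"
  show "okx w y" unfolding okx_def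
  proof
    assume "\<exists>x1 x2. subseq [x1,x2] w \<and> x1 \<noteq> x2 \<and> x2 \<noteq> y \<and> y \<le> x1"
    then obtain x1 x2 where b: "subseq [x1,x2] w" "x1 \<noteq> x2" "x2 \<noteq> y" "y \<le> x1" by blast
    have w: "w = u @ (replicate s M @ replicate t v)" "\<forall>x\<in>set u. x < v" "v < M" "0 < s" "0 < t"
      using assms by (auto simp: S1_def)
    have x1w: "x1 \<in> set w" using subseq_set[OF b(1)] by simp
    have x2w: "x2 \<in> set w" using subseq_set[OF b(1)] by simp
    have "x1 \<le> M" using x1w w by (auto split: if_splits) 
    show False
    proof (cases "M < y")
      case True thus False using \<open>x1 \<le> M\<close> b by simp
    next
      case False
      hence yv: "y = v" using h by simp
      from b(1) w(1) have "subseq [x1,x2] u \<or> x1 \<in> set u \<or> subseq [x1,x2] (replicate s M @ replicate t v)"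
        by (auto simp: subseq2_append)
      moreover have "subseq [x1,x2] u \<Longrightarrow> x1 \<in> set u" using subseq_set by fastforce
      moreover have "x1 \<notin> set u" using w yv b by force
      ultimately have "subseq [x1,x2] (replicate s M @ replicate t v)" by blast
      hence "subseq [x1,x2] (replicate s M) \<or> (x1 = M \<and> x2 = v) \<or> subseq [x1,x2] (replicate t v)"
        by (auto simp: subseq2_append split: if_splits)
      moreover have "\<not> subseq [x1,x2] (replicate s M)" "\<not> subseq [x1,x2] (replicate t v)"
        using subseq2_rep b(2) by metis+
      ultimately show False using b yv by blast
    qed
  qed
qed

lemma shapes: "valid w \<Longrightarrow> w \<noteq> [] \<Longrightarrow> (\<exists>u t M. S0 w u t M) \<or> (\<exists>u s M t v. S1 w u s M t v)"
proof (induction w rule: rev_induct)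
  case Nil thus ?case by simp
next
  case (snoc y w)
  have vw: "valid w" and yl: "y \<le> length w" and ok: "okx w y" using snoc.prems valid_snoc by auto
  show ?case
  proof (cases "w = []")
    case True
    hence "y = 0" using yl by simp
    hence "S0 (w@[y]) [] 1 0" using True by (simp add: S0_def)
    thus ?thesis by blast
  next
    case False
    from snoc.IH[OF vw False] show ?thesis
    proof (elim disjE exE)
      fix u t M assume s: "S0 w u t M"
      hence w: "w = u @ replicate t M" "0 < t" "\<forall>x\<in>set u. x < M" by (auto simp: S0_def)
      from ok_S0[OF s] ok consider "M < y" | "M = y" | "y < M" "\<forall>x\<in>set u. x < y" by force
      thus ?thesis
      proof cases
        case 1
        have "\<forall>x\<in>set w. x < y" using w 1 by (auto split: if_splits)
        hence "S0 (w@[y]) w 1 y" by (simp add: S0_def)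
        thus ?thesis by blast
      next
        case 2
        have "S0 (w@[y]) u (Suc t) M" using w 2 by (simp add: S0_def replicate_append_same)
        thus ?thesis by blast
      next
        case 3
        have "S1 (w@[y]) u t M 1 y" using w 3 by (simp add: S1_def)
        thus ?thesis by blast
      qed
    next
      fix u s M t v assume s1: "S1 w u s M t v"
      hence w: "w = u @ replicate s M @ replicate t v" "0 < s" "0 < t" "v < M" "\<forall>x\<in>set u. x < v"
        by (auto simp: S1_def)
      from ok_S1[OF s1] ok consider "M < y" | "y = v" by force
      thus ?thesis
      proof cases
        case 1
        have "\<forall>x\<in>set w. x < y" using w 1 by (auto split: if_splits)
        hence "S0 (w@[y]) w 1 y" by (simp add: S0_def)
        thus ?thesis by blast
      next
        case 2
        have "S1 (w@[y]) u s M (Suc t) v" using w 2 by (simp add: S1_def replicate_append_same)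
        thus ?thesis by blast
      qed
    qed
  qed
qed



definition lowb :: "nat list \<Rightarrow> nat" where
  "lowb u = (if u = [] then 0 else Suc (Max (set u)))"
definition room :: "nat list \<Rightarrow> nat" where
  "room w = length w - Max (set w)"
definition gap :: "nat list \<Rightarrow> nat" where
  "gap w = (if last w = Max (set w) then Max (set w) - lowb (filter (\<lambda>x. x < Max (set w)) w) else 0)"
definition Allowed :: "nat list \<Rightarrow> nat set" where
  "Allowed w = {y. y \<le> length w \<and> okx w y}"
definition V :: "nat \<Rightarrow> nat list set" where
  "V n = {w. length w = n \<and> valid w}"

lemma lowb_le: "(\<forall>x\<in>set u. x < y) \<longleftrightarrow> lowb u \<le> y"
  by (auto simp: lowb_def Suc_le_eq)

lemma S0_props:
  assumes "S0 w u t M"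
  shows "Max (set w) = M" "last w = M" "gap w = M - lowb u" "w \<noteq> []" "lowb u \<le> M"
proof -
  have w: "w = u @ replicate t M" "0 < t" "\<forall>x\<in>set u. x < M" using assms by (auto simp: S0_def)
  have sw: "set w = insert M (set u)" using w by auto
  show M: "Max (set w) = M" unfolding sw using w(3)
    by (simp add: Max_insert2 less_imp_le)
  show l: "last w = M" using w by (simp add: last_append)
  have f: "filter (\<lambda>x. x < M) w = u" using w by (auto simp: filter_id_conv)
  show "gap w = M - lowb u" unfolding gap_def M l f by simp
  show "w \<noteq> []" using w by simp
  show "lowb u \<le> M" using lowb_le[of u M] w(3) by simp
qed

lemma S1_props:
  assumes "S1 w u s M t v"
  shows "Max (set w) = M" "gap w = 0" "w \<noteq> []"
proof -
  have w: "w = u @ replicate s M @ replicate t v" "0 < s" "0 < t" "v < M" "\<forall>x\<in>set u. x < v"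
    using assms by (auto simp: S1_def)
  have sw: "set w = insert M (insert v (set u))" using w by auto
  show M: "Max (set w) = M" unfolding sw using w
    by (subst Max_insert2) auto
  have l: "last w = v" using w by (simp add: last_append)
  show "gap w = 0" unfolding gap_def M l using w by simp
  show "w \<noteq> []" using w by simp
qed

lemma room_S0: "S0 w u t M \<Longrightarrow> room w = length w - M"
  using S0_props by (simp add: room_def)
lemma room_S1: "S1 w u s M t v \<Longrightarrow> room w = length w - M"
  using S1_props by (simp add: room_def)

lemma S0_snoc_lt: "S0 w u t M \<Longrightarrow> lowb u \<le> y \<Longrightarrow> y < M \<Longrightarrow> S1 (w@[y]) u t M 1 y"
  using lowb_le[of u y] by (auto simp: S0_def S1_def)
lemma S0_snoc_eq: "S0 w u t M \<Longrightarrow> S0 (w@[M]) u (Suc t) M"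
  by (auto simp: S0_def replicate_append_same)
lemma S1_snoc_eq: "S1 w u s M t v \<Longrightarrow> S1 (w@[v]) u s M (Suc t) v"
  by (auto simp: S1_def replicate_append_same)
lemma snoc_gt: "\<forall>x\<in>set w. x < y \<Longrightarrow> S0 (w@[y]) w 1 y"
  by (auto simp: S0_def)

lemma snoc_gt_props:
  assumes "w \<noteq> []" "Max (set w) < y"
  shows "room (w@[y]) = Suc (length w) - y" "gap (w@[y]) = y - Suc (Max (set w))"
proof -
  have a: "\<forall>x\<in>set w. x < y" using assms by (meson List.finite_set Max_ge le_less_trans)
  have s: "S0 (w@[y]) w 1 y" using snoc_gt[OF a] .
  show "room (w@[y]) = Suc (length w) - y" using room_S0[OF s] by simp
  show "gap (w@[y]) = y - Suc (Max (set w))" using S0_props(3)[OF s] assms by (simp add: lowb_def)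
qed

lemma S0_Allowed: assumes "valid w" "S0 w u t M" shows "Allowed w = {lowb u..length w}"
proof (rule set_eqI)
  fix y
  have "okx w y \<longleftrightarrow> (M \<le> y \<or> lowb u \<le> y)" using ok_S0[OF assms(2), of y] lowb_le[of u y] by simp
  also have "\<dots> \<longleftrightarrow> lowb u \<le> y" using S0_props(5)[OF assms(2)] by linarith
  finally show "y \<in> Allowed w \<longleftrightarrow> y \<in> {lowb u..length w}" unfolding Allowed_def by auto
qed

lemma S1_Allowed: assumes "valid w" "S1 w u s M t v" shows "Allowed w = insert v {M<..length w}"
proof (rule set_eqI)
  fix y
  have "M < length w" using valid_bound[OF assms(1)] S1_props(1,3)[OF assms(2)]
    by (metis List.finite_set Max_in set_empty)
  moreover have "v < M" using assms(2) by (simp add: S1_def)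
  moreover have "okx w y \<longleftrightarrow> (M < y \<or> y = v)" using ok_S1[OF assms(2), of y] by simp
  ultimately show "y \<in> Allowed w \<longleftrightarrow> y \<in> insert v {M<..length w}" unfolding Allowed_def
    by (simp only: mem_Collect_eq insert_iff greaterThanAtMost_iff) linarith
qed

lemma reidx: assumes "M \<le> n" shows "(\<Sum>y\<in>{M<..n}. f (Suc n - y)) = (\<Sum>k\<in>{1..n-M}. f k)"
proof (rule sum.reindex_bij_witness[of _ "\<lambda>k. Suc n - k" "\<lambda>y. Suc n - y"])
  fix a assume a: "a \<in> {M<..n}"
  hence "M < a" "a \<le> n" by simp_all
  show "Suc n - (Suc n - a) = a" using \<open>a \<le> n\<close> by simp
  show "f (Suc n - a) = f (Suc n - a)" by (rule refl)
  have "1 \<le> Suc n - a" "Suc n - a \<le> n - M" using \<open>M < a\<close> \<open>a \<le> n\<close> by linarith+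
  thus "Suc n - a \<in> {1..n-M}" by simp
next
  fix b assume b: "b \<in> {1..n-M}"
  hence "1 \<le> b" "b \<le> n - M" by simp_all
  show "Suc n - (Suc n - b) = b" using \<open>b \<le> n - M\<close> assms by linarith
  have "M < Suc n - b" "Suc n - b \<le> n" using \<open>1 \<le> b\<close> \<open>b \<le> n - M\<close> assms by linarith+
  thus "Suc n - b \<in> {M<..n}" by simp
qed

lemma geo1: "(1 - x) * (\<Sum>k\<in>{1..r}. x^k) = x - x^Suc r" for x :: "'a::comm_ring_1"
proof (induction r)
  case 0 thus ?case by simp
next
  case (Suc r)
  have "(1 - x) * (\<Sum>k\<in>{1..Suc r}. x^k) = (1 - x) * (\<Sum>k\<in>{1..r}. x^k) + (1 - x) * x^Suc r"
    by (simp add: distrib_left)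
  also have "\<dots> = x - x^Suc r + (1 - x) * x^Suc r" using Suc.IH by simp
  also have "\<dots> = x - x^Suc (Suc r)" by (simp add: algebra_simps)
  finally show ?case .
qed

lemma geo2: "(1 - x)^2 * (\<Sum>k\<in>{1..r}. of_nat (r - k) * x^k) = of_nat r * x * (1 - x) - x + x^Suc r"
  for x :: "'a::comm_ring_1"
proof (induction r)
  case 0 thus ?case by (simp add: power2_eq_square)
next
  case (Suc r)
  have "(\<Sum>k\<in>{1..Suc r}. of_nat (Suc r - k) * x^k) = (\<Sum>k\<in>{1..r}. of_nat (Suc r - k) * x^k)"
    by (simp add: sum.atLeast_Suc_atMost_Suc_shift)
  also have "\<dots> = (\<Sum>k\<in>{1..r}. of_nat (r - k) * x^k) + (\<Sum>k\<in>{1..r}. x^k)"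
    by (simp add: sum.distrib[symmetric] Suc_diff_le of_nat_Suc algebra_simps)
  finally have "(1-x)^2 * (\<Sum>k\<in>{1..Suc r}. of_nat (Suc r - k) * x^k)
     = (1-x)^2 * (\<Sum>k\<in>{1..r}. of_nat (r - k) * x^k) + (1-x) * ((1-x) * (\<Sum>k\<in>{1..r}. x^k))"
    by (simp add: algebra_simps power2_eq_square)
  also have "\<dots> = of_nat r * x * (1 - x) - x + x^Suc r + (1-x) * (x - x^Suc r)"
    using Suc.IH geo1[of x r] by simp
  also have "\<dots> = of_nat (Suc r) * x * (1 - x) - x + x^Suc (Suc r)"
    by (simp add: algebra_simps)
  finally show ?case .
qed



lemma word_sums:
  fixes x :: "'a::comm_ring_1"
  assumes vw: "valid w" and ne: "w \<noteq> []"
  shows "(1-x) * (\<Sum>y\<in>Allowed w. x^room(w@[y])) =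
           x - x*x^room w + (1-x)*x*x^room w + (1-x)*x*(of_nat (gap w)*x^room w)"
    and "(1-x)^2 * (\<Sum>y\<in>Allowed w. of_nat (gap (w@[y])) * x^room(w@[y])) =
           of_nat (room w)*x*(1-x) - x + x*x^room w + (1-x)^2*x*(of_nat (gap w)*x^room w)"
proof -
  define n where "n = length w"
  define M where "M = Max (set w)"
  define r where "r = n - M"
  have Mn: "M < n" unfolding M_def n_def using valid_bound[OF vw] ne
    by (metis List.finite_set Max_in set_empty)
  have rw: "room w = r" by (simp add: room_def r_def n_def M_def)
  have xr: "x^(Suc n - M) = x * x^r" using Mn by (simp add: r_def Suc_diff_le)
  have big_room: "\<And>y. y \<in> {M<..n} \<Longrightarrow> room (w@[y]) = Suc n - y"
    using snoc_gt_props(1)[OF ne] by (simp add: M_def n_def)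
  have big_gap: "\<And>y. y \<in> {M<..n} \<Longrightarrow> gap (w@[y]) = y - Suc M"
    using snoc_gt_props(2)[OF ne] by (simp add: M_def n_def)
  have S1sum: "(\<Sum>y\<in>{M<..n}. x^room(w@[y])) = (\<Sum>k\<in>{1..r}. x^k)"
  proof -
    have "(\<Sum>y\<in>{M<..n}. x^room(w@[y])) = (\<Sum>y\<in>{M<..n}. x^(Suc n - y))"
      by (rule sum.cong) (simp_all add: big_room)
    also have "\<dots> = (\<Sum>k\<in>{1..r}. x^k)" using reidx[of M n "\<lambda>k. x^k"] Mn by (simp add: r_def)
    finally show ?thesis .
  qed
  have S2sum: "(\<Sum>y\<in>{M<..n}. of_nat (gap (w@[y])) * x^room(w@[y])) = (\<Sum>k\<in>{1..r}. of_nat (r - k) * x^k)"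
  proof -
    have "(\<Sum>y\<in>{M<..n}. of_nat (gap (w@[y])) * x^room(w@[y])) =
          (\<Sum>y\<in>{M<..n}. of_nat (r - (Suc n - y)) * x^(Suc n - y))"
      by (rule sum.cong) (auto simp: big_room big_gap r_def)
    also have "\<dots> = (\<Sum>k\<in>{1..r}. of_nat (r - k) * x^k)"
      using reidx[of M n "\<lambda>k. of_nat (r - k) * x^k"] Mn by (simp add: r_def)
    finally show ?thesis .
  qed
  have g1: "(1 - x) * (\<Sum>k\<in>{1..r}. x^k) = x - x * x^r" using geo1[of x r] by simp
  have g2: "(1 - x)^2 * (\<Sum>k\<in>{1..r}. of_nat (r - k) * x^k) = of_nat r * x * (1 - x) - x + x * x^r"
    using geo2[of x r] by simp
  from shapes[OF vw ne] have
    "(\<Sum>y\<in>Allowed w. x^room(w@[y])) = of_nat (gap w) * (x * x^r) + x * x^r + (\<Sum>k\<in>{1..r}. x^k) \<and>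
     (\<Sum>y\<in>Allowed w. of_nat (gap (w@[y])) * x^room(w@[y])) = of_nat (gap w) * (x * x^r) + (\<Sum>k\<in>{1..r}. of_nat (r - k) * x^k)"
  proof (elim disjE exE)
    fix u t M' assume s: "S0 w u t M'"
    have MM: "M' = M" using S0_props(1)[OF s] by (simp add: M_def)
    define L where "L = lowb u"
    have LM: "L \<le> M" using S0_props(5)[OF s] MM by (simp add: L_def)
    have gw: "gap w = M - L" using S0_props(3)[OF s] MM by (simp add: L_def)
    have A: "Allowed w = {L..<M} \<union> ({M} \<union> {M<..n})"
      using S0_Allowed[OF vw s] LM Mn by (auto simp: L_def n_def)
    have lowr: "\<And>y. y \<in> {L..<M} \<Longrightarrow> room (w@[y]) = Suc n - M \<and> gap (w@[y]) = 0"
    proof -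
      fix y assume y: "y \<in> {L..<M}"
      have s1: "S1 (w@[y]) u t M 1 y" using S0_snoc_lt[OF s] y MM by (simp add: L_def)
      show "room (w@[y]) = Suc n - M \<and> gap (w@[y]) = 0"
        using room_S1[OF s1] S1_props(2)[OF s1] by (simp add: n_def)
    qed
    have s0: "S0 (w@[M]) u (Suc t) M" using S0_snoc_eq[OF s] MM by simp
    have eqr: "room (w@[M]) = Suc n - M" "gap (w@[M]) = M - L"
      using room_S0[OF s0] S0_props(3)[OF s0] by (simp_all add: n_def L_def)
    have A': "Allowed w = insert M ({L..<M} \<union> {M<..n})" using A by auto
    have Mn': "M \<notin> {L..<M} \<union> {M<..n}" by simp
    have dj: "{L..<M} \<inter> {M<..n} = {}" by auto
    have sp: "\<And>f::nat\<Rightarrow>'a. (\<Sum>y\<in>Allowed w. f y) = (\<Sum>y\<in>{L..<M}. f y) + (f M + (\<Sum>y\<in>{M<..n}. f y))"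
    proof -
      fix f :: "nat \<Rightarrow> 'a"
      have "(\<Sum>y\<in>Allowed w. f y) = f M + (\<Sum>y\<in>{L..<M} \<union> {M<..n}. f y)"
        unfolding A' by (rule sum.insert[OF _ Mn']) simp
      also have "(\<Sum>y\<in>{L..<M} \<union> {M<..n}. f y) = (\<Sum>y\<in>{L..<M}. f y) + (\<Sum>y\<in>{M<..n}. f y)"
        by (rule sum.union_disjoint[OF _ _ dj]) simp_all
      finally show "(\<Sum>y\<in>Allowed w. f y) = (\<Sum>y\<in>{L..<M}. f y) + (f M + (\<Sum>y\<in>{M<..n}. f y))"
        by (simp add: algebra_simps)
    qed
    have "(\<Sum>y\<in>Allowed w. x^room(w@[y])) =
       (\<Sum>y\<in>{L..<M}. x^room(w@[y])) + (x^room(w@[M]) + (\<Sum>y\<in>{M<..n}. x^room(w@[y])))"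
      by (rule sp)
    also have "(\<Sum>y\<in>{L..<M}. x^room(w@[y])) = (\<Sum>y\<in>{L..<M}. x^(Suc n - M))"
      by (rule sum.cong) (simp_all add: lowr)
    finally have P1: "(\<Sum>y\<in>Allowed w. x^room(w@[y])) = of_nat (gap w) * (x * x^r) + x * x^r + (\<Sum>k\<in>{1..r}. x^k)"
      using S1sum eqr xr gw by (simp add: algebra_simps)
    have "(\<Sum>y\<in>Allowed w. of_nat (gap (w@[y])) * x^room(w@[y])) =
       (\<Sum>y\<in>{L..<M}. of_nat (gap (w@[y])) * x^room(w@[y])) + (of_nat (gap (w@[M])) * x^room(w@[M]) +
        (\<Sum>y\<in>{M<..n}. of_nat (gap (w@[y])) * x^room(w@[y])))"
      by (rule sp)
    also have "(\<Sum>y\<in>{L..<M}. of_nat (gap (w@[y])) * x^room(w@[y])) = 0"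
      by (rule sum.neutral) (simp add: lowr)
    finally have P2: "(\<Sum>y\<in>Allowed w. of_nat (gap (w@[y])) * x^room(w@[y])) =
        of_nat (gap w) * (x * x^r) + (\<Sum>k\<in>{1..r}. of_nat (r - k) * x^k)"
      using S2sum eqr xr gw by simp
    show ?thesis using P1 P2 by simp
  next
    fix u s M' t v assume s: "S1 w u s M' t v"
    have MM: "M' = M" using S1_props(1)[OF s] by (simp add: M_def)
    have gw: "gap w = 0" using S1_props(2)[OF s] .
    have vM: "v < M" using s MM by (simp add: S1_def)
    have A: "Allowed w = insert v {M<..n}" using S1_Allowed[OF vw s] MM by (simp add: n_def)
    have vn: "v \<notin> {M<..n}" using vM by simp
    have s1: "S1 (w@[v]) u s M (Suc t) v" using S1_snoc_eq[OF s] MM by simp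
    have eqr: "room (w@[v]) = Suc n - M" "gap (w@[v]) = 0"
      using room_S1[OF s1] S1_props(2)[OF s1] by (simp_all add: n_def)
    have P1: "(\<Sum>y\<in>Allowed w. x^room(w@[y])) = x * x^r + (\<Sum>k\<in>{1..r}. x^k)"
      unfolding A using vn eqr xr S1sum by simp
    have P2: "(\<Sum>y\<in>Allowed w. of_nat (gap (w@[y])) * x^room(w@[y])) = (\<Sum>k\<in>{1..r}. of_nat (r - k) * x^k)"
      unfolding A using vn eqr S2sum by simp
    show ?thesis using P1 P2 gw by simp
  qed
  hence E1: "(\<Sum>y\<in>Allowed w. x^room(w@[y])) = of_nat (gap w) * (x * x^r) + x * x^r + (\<Sum>k\<in>{1..r}. x^k)"
    and E2: "(\<Sum>y\<in>Allowed w. of_nat (gap (w@[y])) * x^room(w@[y])) = of_nat (gap w) * (x * x^r) + (\<Sum>k\<in>{1..r}. of_nat (r - k) * x^k)"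
    by auto
  show "(1-x) * (\<Sum>y\<in>Allowed w. x^room(w@[y])) =
           x - x*x^room w + (1-x)*x*x^room w + (1-x)*x*(of_nat (gap w)*x^room w)"
    unfolding E1 rw distrib_left g1 by (simp add: algebra_simps)
  show "(1-x)^2 * (\<Sum>y\<in>Allowed w. of_nat (gap (w@[y])) * x^room(w@[y])) =
           of_nat (room w)*x*(1-x) - x + x*x^room w + (1-x)^2*x*(of_nat (gap w)*x^room w)"
    unfolding E2 rw distrib_left g2 by (simp add: algebra_simps)
qed

lemma finite_V: "finite (V n)"
proof -
  have "V n \<subseteq> {xs. set xs \<subseteq> {..<n} \<and> length xs = n}"
    using valid_bound by (auto simp: V_def)
  thus ?thesis using finite_lists_length_eq[of "{..<n}" n] finite_subset by blast
qed

lemma finite_Allowed: "finite (Allowed w)"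
  by (rule finite_subset[of _ "{..length w}"]) (auto simp: Allowed_def)

lemma V_Suc: "V (Suc n) = (\<lambda>(w,y). w@[y]) ` (SIGMA w:V n. Allowed w)"
proof
  show "V (Suc n) \<subseteq> (\<lambda>(w,y). w@[y]) ` (SIGMA w:V n. Allowed w)"
  proof
    fix a assume a: "a \<in> V (Suc n)"
    hence ne: "a \<noteq> []" by (auto simp: V_def)
    hence ae: "a = butlast a @ [last a]" by simp
    have "valid (butlast a @ [last a])" using a ae by (simp add: V_def)
    hence "butlast a \<in> V n" "last a \<in> Allowed (butlast a)" using a
      by (auto simp: V_def Allowed_def valid_snoc)
    thus "a \<in> (\<lambda>(w,y). w@[y]) ` (SIGMA w:V n. Allowed w)"
      using ae by (intro image_eqI[of _ _ "(butlast a, last a)"]) auto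
  qed
next
  show "(\<lambda>(w,y). w@[y]) ` (SIGMA w:V n. Allowed w) \<subseteq> V (Suc n)"
    by (auto simp: V_def Allowed_def valid_snoc)
qed

lemma sum_V_Suc: "(\<Sum>a\<in>V (Suc n). f a) = (\<Sum>w\<in>V n. \<Sum>y\<in>Allowed w. f (w@[y]))"
proof -
  have inj: "inj_on (\<lambda>(w,y). w@[y]) (SIGMA w:V n. Allowed w)"
    by (auto simp: inj_on_def)
  have "(\<Sum>a\<in>V (Suc n). f a) = (\<Sum>p\<in>(SIGMA w:V n. Allowed w). f ((\<lambda>(w,y). w@[y]) p))"
    unfolding V_Suc by (rule sum.reindex[OF inj, unfolded comp_def])
  also have "\<dots> = (\<Sum>(w,y)\<in>(SIGMA w:V n. Allowed w). f (w@[y]))"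
    by (rule sum.cong[OF refl]) (simp add: split_beta)
  also have "\<dots> = (\<Sum>w\<in>V n. \<Sum>y\<in>Allowed w. f (w@[y]))"
    by (rule sum.Sigma[symmetric]) (auto simp: finite_V finite_Allowed)
  finally show ?thesis .
qed

lemma V_0: "V 0 = {[]}" by (auto simp: V_def)

lemma V_1: "V (Suc 0) = {[0]}"
proof -
  have "V (Suc 0) = (\<lambda>(w,y). w@[y]) ` (SIGMA w:V 0. Allowed w)" by (rule V_Suc)
  moreover have "Allowed [] = {0}" by (auto simp: Allowed_def okx_def)
  hence "(SIGMA w:V 0. Allowed w) = {([],0)}" unfolding V_0 by blast
  ultimately show ?thesis by simp
qed

lemma V_ne: "w \<in> V n \<Longrightarrow> 0 < n \<Longrightarrow> w \<noteq> [] \<and> valid w"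
  by (auto simp: V_def)

definition PP :: "nat \<Rightarrow> 'a::comm_ring_1 \<Rightarrow> 'a" where "PP n x = (\<Sum>w\<in>V n. x^room w)"
definition RR :: "nat \<Rightarrow> 'a::comm_ring_1 \<Rightarrow> 'a" where "RR n x = (\<Sum>w\<in>V n. of_nat (gap w) * x^room w)"
definition NN :: "nat \<Rightarrow> 'a::comm_ring_1" where "NN n = of_nat (card (V n))"
definition DD :: "nat \<Rightarrow> 'a::comm_ring_1" where "DD n = (\<Sum>w\<in>V n. of_nat (room w))"

lemma PP_rec: "0 < n \<Longrightarrow> (1-x) * PP (Suc n) x = x * NN n - x * PP n x + (1-x)*x*PP n x + (1-x)*x*RR n x"
proof -
  assume n: "0 < n"
  have "(1-x) * PP (Suc n) x = (\<Sum>w\<in>V n. (1-x) * (\<Sum>y\<in>Allowed w. x^room(w@[y])))"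
    unfolding PP_def sum_V_Suc by (simp add: sum_distrib_left)
  also have "\<dots> = (\<Sum>w\<in>V n. x - x*x^room w + (1-x)*x*x^room w + (1-x)*x*(of_nat (gap w)*x^room w))"
    by (rule sum.cong[OF refl]) (use V_ne n word_sums(1) in blast)
  also have "\<dots> = x * NN n - x * PP n x + (1-x)*x*PP n x + (1-x)*x*RR n x"
    by (simp add: sum.distrib sum_subtractf sum_distrib_left NN_def PP_def RR_def mult.commute)
  finally show ?thesis .
qed

lemma RR_rec: "0 < n \<Longrightarrow> (1-x)^2 * RR (Suc n) x = x*(1-x) * DD n - x * NN n + x * PP n x + (1-x)^2*x*RR n x"
proof -
  assume n: "0 < n"
  have "(1-x)^2 * RR (Suc n) x = (\<Sum>w\<in>V n. (1-x)^2 * (\<Sum>y\<in>Allowed w. of_nat (gap (w@[y])) * x^room(w@[y])))"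
    unfolding RR_def sum_V_Suc by (simp add: sum_distrib_left)
  also have "\<dots> = (\<Sum>w\<in>V n. of_nat (room w)*x*(1-x) - x + x*x^room w + (1-x)^2*x*(of_nat (gap w)*x^room w))"
    by (rule sum.cong[OF refl]) (use V_ne n word_sums(2) in blast)
  also have "\<dots> = x*(1-x) * DD n - x * NN n + x * PP n x + (1-x)^2*x*RR n x"
    by (simp add: sum.distrib sum_subtractf sum_distrib_left sum_distrib_right NN_def PP_def RR_def DD_def mult.commute mult.left_commute)
  finally show ?thesis .
qed

lemma PP_1: "PP (Suc 0) x = x" by (simp add: PP_def V_1 room_def)
lemma RR_1: "RR (Suc 0) x = 0" by (simp add: RR_def V_1 gap_def lowb_def)



definition zsum :: "(nat \<Rightarrow> 'a::comm_ring_1 fps) \<Rightarrow> 'a fps" where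
  "zsum c = Abs_fps (\<lambda>m. \<Sum>i\<le>m. c i $ (m - i))"

lemma zsum_nth: "zsum c $ m = (\<Sum>i\<le>m. c i $ (m - i))"
  by (simp add: zsum_def)

lemma zsum_trunc: "k \<le> m \<Longrightarrow> zsum c $ k = (\<Sum>i\<le>m. fps_X^i * c i) $ k"
proof -
  assume km: "k \<le> m"
  have "(\<Sum>i\<le>m. fps_X^i * c i) $ k = (\<Sum>i\<le>m. (if k < i then 0 else c i $ (k - i)))"
    by (simp add: fps_sum_nth fps_X_power_mult_nth)
  also have "\<dots> = (\<Sum>i\<le>k. c i $ (k - i))"
    by (rule sum.mono_neutral_cong_right) (use km in auto)
  finally show ?thesis by (simp add: zsum_nth)
qed

lemma mult_trunc: "(\<And>k. k \<le> m \<Longrightarrow> f $ k = g $ k) \<Longrightarrow> (A * f) $ m = (A * g) $ m"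
  by (simp add: fps_mult_nth)

lemma zsum_mult_left: "zsum (\<lambda>n. A * c n) = A * zsum c"
proof (rule fps_ext)
  fix m
  have "(A * zsum c) $ m = (A * (\<Sum>i\<le>m. fps_X^i * c i)) $ m"
    by (rule mult_trunc) (simp add: zsum_trunc)
  also have "\<dots> = (\<Sum>i\<le>m. fps_X^i * (A * c i)) $ m"
    by (simp add: sum_distrib_left algebra_simps)
  also have "\<dots> = zsum (\<lambda>n. A * c n) $ m" using zsum_trunc[of m m "\<lambda>n. A * c n"] by simp
  finally show "zsum (\<lambda>n. A * c n) $ m = (A * zsum c) $ m" by simp
qed

lemma zsum_add: "zsum (\<lambda>n. c n + d n) = zsum c + zsum d"
  by (rule fps_ext) (simp add: zsum_nth sum.distrib)

lemma zsum_diff: "zsum (\<lambda>n. c n - d n) = zsum c - zsum d"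
  by (rule fps_ext) (simp add: zsum_nth sum_subtractf)

lemma zsum_shift: "zsum c = c 0 + fps_X * zsum (\<lambda>n. c (Suc n))"
proof (rule fps_ext)
  fix m show "zsum c $ m = (c 0 + fps_X * zsum (\<lambda>n. c (Suc n))) $ m"
  proof (cases m)
    case 0 thus ?thesis by (simp add: zsum_nth)
  next
    case (Suc k)
    have "zsum c $ Suc k = c 0 $ Suc k + (\<Sum>i\<le>k. c (Suc i) $ (k - i))"
      unfolding zsum_nth by (subst sum.atMost_Suc_shift) simp
    thus ?thesis using Suc by (simp add: zsum_nth)
  qed
qed

lemma zsum_const: "zsum (\<lambda>n. fps_const (a n)) = Abs_fps a"
proof (rule fps_ext)
  fix m
  have "(\<Sum>i\<le>m. fps_const (a i) $ (m - i)) = (\<Sum>i\<in>{m}. a i)"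
    by (rule sum.mono_neutral_cong_right) auto
  thus "zsum (\<lambda>n. fps_const (a n)) $ m = Abs_fps a $ m" by (simp add: zsum_nth)
qed



lemma kernel:
  fixes X U \<Phi> \<Psi> Fs Ds c :: "real fps"
  assumes X0: "X \<noteq> 0" and U0: "U \<noteq> 0"
  and e1: "(1-U)*(\<Phi> - U) = X*(U*Fs - U*\<Phi> + (1-U)*U*\<Phi> + (1-U)*U*\<Psi>)"
  and e2: "(1-U)^2*\<Psi> = X*(U*(1-U)*Ds - U*Fs + U*\<Phi> + (1-U)^2*U*\<Psi>)"
  and k: "2*((1-U)*(1-X*U)) = c*X*U"
  and cc: "c*c + 2*c = 4"
  shows "(1-U)*(c + 2*X*Ds) = (2-c)*X*Fs"
proof -
  have "U*(c*X*\<Phi> + 2*X*\<Phi> - 2*X*(1-U)*\<Psi> - 2*(1-U) - 2*X*Fs)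
      = 2*((1-U)*(\<Phi> - U) - X*(U*Fs - U*\<Phi> + (1-U)*U*\<Phi> + (1-U)*U*\<Psi>)) + \<Phi>*(c*X*U - 2*((1-U)*(1-X*U)))"
    by (simp add: algebra_simps)
  also have "\<dots> = 0" using e1 k by simp
  finally have A1: "c*X*\<Phi> + 2*X*\<Phi> - 2*X*(1-U)*\<Psi> - 2*(1-U) - 2*X*Fs = 0" using U0 by simp
  have "(X*U)*(c*(1-U)*\<Psi> - 2*\<Phi> - 2*(1-U)*Ds + 2*Fs)
      = 2*((1-U)^2*\<Psi> - X*(U*(1-U)*Ds - U*Fs + U*\<Phi> + (1-U)^2*U*\<Psi>)) + (1-U)*\<Psi>*(c*X*U - 2*((1-U)*(1-X*U)))"
    by (simp add: algebra_simps power2_eq_square)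
  also have "\<dots> = 0" using e2 k by simp
  finally have A2: "c*(1-U)*\<Psi> - 2*\<Phi> - 2*(1-U)*Ds + 2*Fs = 0" using U0 X0 by simp
  have "2*((1-U)*(c + 2*X*Ds) - (2-c)*X*Fs)
      = -(c * (c*X*\<Phi> + 2*X*\<Phi> - 2*X*(1-U)*\<Psi> - 2*(1-U) - 2*X*Fs))
        - 2*X*(c*(1-U)*\<Psi> - 2*\<Phi> - 2*(1-U)*Ds + 2*Fs) + X*\<Phi>*(c*c + 2*c - 4)"
    by (simp add: algebra_simps)
  also have "\<dots> = 0" using A1 A2 cc by simp
  finally show ?thesis by simp
qed



lemma sqrt4: "sqrt 4 = (2::real)"
proof -
  have "sqrt 4 = sqrt ((2::real)^2)" by simp
  thus ?thesis by (simp only: real_sqrt_abs)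
qed

lemma sqrt2_prop:
  fixes A :: "real fps"
  assumes A0: "A $ 0 = 4"
  shows "fps_sqrt2 A ^ 2 = A \<and> fps_sqrt2 A $ 0 = 2"
proof -
  define R where "R = fps_radical (\<lambda>k x. sqrt x) 2 A"
  have R0: "R $ 0 = 2" unfolding R_def using A0 sqrt4 by simp
  have a0: "A $ 0 \<noteq> 0" using A0 by simp
  have h: "(sqrt (A $ 0)) ^ Suc 1 = A $ 0" using A0 sqrt4 by simp
  have "fps_radical (\<lambda>k x. sqrt x) (Suc 1) A ^ Suc 1 = A"
    using iffD1[OF power_radical[OF a0, of "\<lambda>k x. sqrt x" 1]] h by simp
  hence R2: "R ^ 2 = A" unfolding R_def by (simp only: Suc_1)
  have uniq: "S = R" if "S ^ 2 = A \<and> S $ 0 = 2" for S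
  proof -
    have "(S - R) * (S + R) = S^2 - R^2" by (simp add: algebra_simps power2_eq_square)
    also have "\<dots> = 0" using that R2 by simp
    finally have "(S - R) * (S + R) = 0" .
    moreover have "S + R \<noteq> 0"
    proof
      assume "S + R = 0"
      hence "(S + R) $ 0 = 0" by simp
      thus False using that R0 by simp
    qed
    ultimately show "S = R" by simp
  qed
  have "fps_sqrt2 A = R" unfolding fps_sqrt2_def
  proof (rule the_equality)
    show "R ^ 2 = A \<and> R $ 0 = 2" using R2 R0 by simp
  next
    fix S assume "S ^ 2 = A \<and> S $ 0 = 2"
    thus "S = R" by (rule uniq)
  qed
  thus ?thesis using R2 R0 by simp
qed

lemma div4: "(f :: real fps) / fps_const 4 * 4 = f"
proof -
  have "f / fps_const 4 = f * fps_const (1/4)"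
    by (simp add: fps_divide_unit fps_const_inverse)
  hence "f / fps_const 4 * 4 = f * (fps_const (1/4) * fps_const 4)"
    by (simp add: fps_numeral_fps_const mult.assoc)
  also have "fps_const (1/4) * fps_const 4 = (1 :: real fps)" by simp
  finally show ?thesis by simp
qed

lemma shiftX: "(N :: real fps) $ 0 = 0 \<Longrightarrow> N = fps_X * fps_shift 1 N"
  by (rule fps_ext) (simp)

lemma root_rel:
  fixes t :: real and Y :: "real fps"
  assumes tt: "t * t = 5"
  and Y: "Y = fps_shift 1 (fps_const 2 + fps_const (1 - t) * fps_X
        - fps_sqrt2 (fps_const 4 - fps_const (4 * (3 + t)) * fps_X
                     - fps_const (2 * (t - 3)) * fps_X ^ 2)) / fps_const 4"
  shows "2*fps_X*Y^2 - (2 + fps_const (1 - t)*fps_X)*Y + 2 = 0"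
proof -
  define A where "A = fps_const 4 - fps_const (4 * (3 + t)) * fps_X - fps_const (2 * (t - 3)) * fps_X ^ 2"
  define S where "S = fps_sqrt2 A"
  define N where "N = fps_const 2 + fps_const (1 - t) * fps_X - S"
  have A0: "A $ 0 = 4" by (simp add: A_def)
  have S: "S^2 = A" "S $ 0 = 2" using sqrt2_prop[OF A0] by (simp_all add: S_def)
  have N0: "N $ 0 = 0" using S(2) by (simp add: N_def)
  have "Y * 4 = fps_shift 1 N" unfolding Y using div4 by (simp add: N_def S_def A_def)
  hence N4: "N = 4 * fps_X * Y" using shiftX[OF N0] by (simp add: algebra_simps)
  define c where "c = fps_const (1 - t)"
  define T where "T = fps_const t"
  have TT: "T * T = 5" using tt by (simp add: T_def fps_numeral_fps_const)
  have Sform: "S = 2 + c * fps_X - 4 * fps_X * Y"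
    using N4 by (simp add: N_def c_def fps_numeral_fps_const algebra_simps)
  have Aform: "A = 4 - 4*(3 + T)*fps_X - 2*(T - 3)*fps_X^2"
    by (simp add: A_def T_def fps_numeral_fps_const)
  have c1: "c = 1 - T" unfolding c_def T_def by (metis fps_const_1_eq_1 fps_const_sub)
  have "(2 + c * fps_X - 4 * fps_X * Y)^2 - (4 - 4*(3 + T)*fps_X - 2*(T - 3)*fps_X^2)
        = 8 * fps_X * (2*fps_X*Y^2 - (2 + c*fps_X)*Y + 2) + fps_X^2 * (T*T - 5)"
    unfolding c1 by (simp add: algebra_simps power2_eq_square)
  moreover have "(2 + c * fps_X - 4 * fps_X * Y)^2 - (4 - 4*(3 + T)*fps_X - 2*(T - 3)*fps_X^2) = 0"
    using S(1) Sform Aform by simp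
  ultimately have "8 * fps_X * (2*fps_X*Y^2 - (2 + c*fps_X)*Y + 2) = 0" using TT by simp
  thus ?thesis by (simp add: c_def)
qed



lemma I_count_V: "I_count n = card (V n)"
  unfolding I_count_def V_def inversion_seq_def valid_def pats_def
  by (rule arg_cong[where f=card]) auto

definition Phi :: "real fps \<Rightarrow> real fps" where "Phi U = zsum (\<lambda>n. PP (Suc n) U)"
definition Psi :: "real fps \<Rightarrow> real fps" where "Psi U = zsum (\<lambda>n. RR (Suc n) U)"
definition Fs :: "real fps" where "Fs = zsum (\<lambda>n. NN (Suc n))"
definition Ds :: "real fps" where "Ds = zsum (\<lambda>n. DD (Suc n))"

lemma eq1: "(1-U)*(Phi U - U) = fps_X*(U*Fs - U*Phi U + (1-U)*U*Phi U + (1-U)*U*Psi U)"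
proof -
  define Z where "Z = zsum (\<lambda>n. PP (Suc (Suc n)) U)"
  have sh: "Phi U = U + fps_X * Z"
    unfolding Phi_def Z_def by (subst zsum_shift) (simp add: PP_1)
  have "(1-U) * Z = zsum (\<lambda>n. (1-U) * PP (Suc (Suc n)) U)"
    unfolding Z_def by (rule zsum_mult_left[symmetric])
  also have "\<dots> = zsum (\<lambda>n. U * NN (Suc n) - U * PP (Suc n) U + (1-U)*U*PP (Suc n) U + (1-U)*U*RR (Suc n) U)"
    by (rule arg_cong[where f=zsum], rule ext, rule PP_rec) simp
  also have "\<dots> = U*Fs - U*Phi U + (1-U)*U*Phi U + (1-U)*U*Psi U"
    by (simp only: zsum_add zsum_diff zsum_mult_left Fs_def Phi_def Psi_def)
  finally have "(1-U) * Z = U*Fs - U*Phi U + (1-U)*U*Phi U + (1-U)*U*Psi U" .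
  moreover have "(1-U)*(Phi U - U) = fps_X * ((1-U) * Z)" unfolding sh by (simp add: algebra_simps)
  ultimately show ?thesis by simp
qed

lemma eq2: "(1-U)^2*Psi U = fps_X*(U*(1-U)*Ds - U*Fs + U*Phi U + (1-U)^2*U*Psi U)"
proof -
  define Z where "Z = zsum (\<lambda>n. RR (Suc (Suc n)) U)"
  have sh: "Psi U = fps_X * Z"
    unfolding Psi_def Z_def by (subst zsum_shift) (simp add: RR_1)
  have "(1-U)^2 * Z = zsum (\<lambda>n. (1-U)^2 * RR (Suc (Suc n)) U)"
    unfolding Z_def by (rule zsum_mult_left[symmetric])
  also have "\<dots> = zsum (\<lambda>n. U*(1-U) * DD (Suc n) - U * NN (Suc n) + U * PP (Suc n) U + (1-U)^2*U*RR (Suc n) U)"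
    by (rule arg_cong[where f=zsum], rule ext, rule RR_rec) simp
  also have "\<dots> = U*(1-U)*Ds - U*Fs + U*Phi U + (1-U)^2*U*Psi U"
    by (simp only: zsum_add zsum_diff zsum_mult_left Fs_def Phi_def Psi_def Ds_def)
  finally have "(1-U)^2 * Z = U*(1-U)*Ds - U*Fs + U*Phi U + (1-U)^2*U*Psi U" .
  moreover have "(1-U)^2*Psi U = fps_X * ((1-U)^2 * Z)" unfolding sh by (simp add: algebra_simps)
  ultimately show ?thesis by simp
qed

lemma coeffs_rel:
  fixes Y :: "real fps" and t :: real
  assumes R: "2*fps_X*Y^2 - (2 + fps_const (1 - t)*fps_X)*Y + 2 = 0"
  shows "Y $ 0 = 1" "Y $ 1 = (1 + t) / 2"
proof -
  have e: "fps_X * (fps_const 2 * Y^2 - fps_const (1 - t) * Y) = fps_const 2 * Y - fps_const 2"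
  proof -
    have "fps_X * (fps_const 2 * Y^2 - fps_const (1 - t) * Y) - (fps_const 2 * Y - fps_const 2)
        = 2*fps_X*Y^2 - (2 + fps_const (1 - t)*fps_X)*Y + 2"
      by (simp add: fps_numeral_fps_const[symmetric] algebra_simps)
    thus ?thesis using R by simp
  qed
  have e0: "(fps_X * (fps_const 2 * Y^2 - fps_const (1 - t) * Y)) $ 0 = (fps_const 2 * Y - fps_const 2) $ 0"
    using e by simp
  thus "Y $ 0 = 1" by simp
  have e1: "(fps_X * (fps_const 2 * Y^2 - fps_const (1 - t) * Y)) $ 1 = (fps_const 2 * Y - fps_const 2) $ 1"
    using e by simp
  hence "2 * (Y $ 0)^2 - (1 - t) * Y $ 0 = 2 * Y $ 1" by (simp add: fps_nth_power_0)
  thus "Y $ 1 = (1 + t) / 2" using \<open>Y $ 0 = 1\<close> by simp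
qed

lemma kernel_inst:
  fixes Y :: "real fps" and t :: real
  assumes tt: "t * t = 5"
  and R: "2*fps_X*Y^2 - (2 + fps_const (1 - t)*fps_X)*Y + 2 = 0"
  shows "(1-Y)*(fps_const (-1-t) + 2*fps_X*Ds) = fps_const (3+t)*fps_X*Fs"
proof -
  have Y0: "Y \<noteq> 0" using coeffs_rel(1)[OF R] by auto
  have X0: "fps_X \<noteq> (0::real fps)" by simp
  define c' where "c' = fps_const (1 - t)"
  define c where "c = fps_const (-1 - t)"
  have cc': "c = c' - 2" by (simp add: c_def c'_def fps_numeral_fps_const)
  have k: "2*((1-Y)*(1-fps_X*Y)) = c*fps_X*Y"
  proof -
    have "2*((1-Y)*(1-fps_X*Y)) - c*fps_X*Y = 2*fps_X*Y^2 - (2 + c'*fps_X)*Y + 2"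
      unfolding cc' by (simp add: algebra_simps power2_eq_square)
    thus ?thesis using R by (simp add: c'_def)
  qed
  have cc: "c*c + 2*c = 4"
  proof -
    have "c*c + 2*c = fps_const ((-1-t)*(-1-t) + 2*(-1-t))" by (simp add: c_def fps_numeral_fps_const)
    also have "(-1-t)*(-1-t) + 2*(-1-t) = t*t - 1" by (simp add: algebra_simps)
    finally show ?thesis using tt by (simp add: fps_numeral_fps_const)
  qed
  have "(1-Y)*(c + 2*fps_X*Ds) = (2-c)*fps_X*Fs"
    by (rule kernel[OF X0 Y0 eq1 eq2 k cc])
  moreover have "2 - c = fps_const (3+t)" by (simp add: c_def fps_numeral_fps_const)
  ultimately show ?thesis by (simp add: c_def)
qed



lemma big_identity:
  fixes z a b s :: "'a::comm_ring_1"
  shows "2*z^2*(((3+s)*(1-b) - (3-s)*(1-a)) * (a*b*z^2 - a*z - b*z - z + 1) - 2*s*(1-a)*(1-b)*(a*b*z^2 - a*z - b*z - z + 1)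
     - ((3+s)*(1-b) - (3-s)*(1-a))*(1 - a*z - b*z)) =
   (-2*z^2*s + 2*z^2*b*s + 3*z^3*b + z^3*b*s - 2*z^3*b^2*s) * (2*z*a^2 - (2 + (1-s)*z)*a + 2)
   + (-3*z^3*a + z^3*a*s^2) * (2*z*b^2 - (2 + (1+s)*z)*b + 2) + z^4*a*b*s*(s*s-5)"
  by (simp add: algebra_simps power2_eq_square power3_eq_cube power4_eq_xxxx)

lemma final_alg:
  fixes z a b s G :: "real fps"
  assumes s: "s*s = 5"
  and R1: "2*z*a^2 - (2 + (1-s)*z)*a + 2 = 0"
  and R3: "2*z*b^2 - (2 + (1+s)*z)*b + 2 = 0"
  and z0: "z \<noteq> 0"
  and Bnz: "(3+s)*(1-b) - (3-s)*(1-a) \<noteq> 0"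
  and GB: "G*((3+s)*(1-b) - (3-s)*(1-a)) = -2*s*(1-a)*(1-b)"
  shows "(1+G)*(a*b*z^2 - a*z - b*z - z + 1) = 1 - a*z - b*z"
proof -
  define B where "B = (3+s)*(1-b) - (3-s)*(1-a)"
  define E where "E = a*b*z^2 - a*z - b*z - z + 1"
  define T where "T = 1 - a*z - b*z"
  have "2*z^2*(B*E - 2*s*(1-a)*(1-b)*E - B*T) = 0"
    unfolding B_def E_def T_def big_identity R1 R3 s by simp
  hence Q: "B*E - 2*s*(1-a)*(1-b)*E - B*T = 0" using z0 by simp
  have "B*((1+G)*E - T) = B*E + (G*B)*E - B*T" by (simp add: algebra_simps)
  also have "\<dots> = B*E - 2*s*(1-a)*(1-b)*E - B*T" using GB by (simp add: B_def)
  finally have "B*((1+G)*E - T) = 0" using Q by simp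
  hence "(1+G)*E - T = 0" using Bnz by (simp add: B_def)
  thus ?thesis by (simp add: E_def T_def)
qed

lemma GB_gen:
  fixes G a b s D X :: "real fps"
  assumes K1: "(1-a)*(-1 - s + 2*X*D) = (3 + s)*G" and K3: "(1-b)*(-1 + s + 2*X*D) = (3 - s)*G"
  shows "G*((3+s)*(1-b) - (3-s)*(1-a)) = -2*s*(1-a)*(1-b)"
proof -
  have "G*((3+s)*(1-b) - (3-s)*(1-a)) = (1-b)*((3 + s)*G) - (1-a)*((3 - s)*G)"
    by (simp add: algebra_simps)
  also have "\<dots> = (1-b)*((1-a)*(-1 - s + 2*X*D)) - (1-a)*((1-b)*(-1 + s + 2*X*D))"
    using K1 K3 by simp
  also have "\<dots> = -2*s*(1-a)*(1-b)" by (simp add: algebra_simps)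
  finally show ?thesis .
qed

abbreviation s5 :: "real fps" where "s5 \<equiv> fps_const (sqrt 5)"

lemma s5sq: "s5 * s5 = 5"
  by (simp add: fps_numeral_fps_const)

lemma X1_rel: "2*fps_X*X1^2 - (2 + fps_const (1 - sqrt 5)*fps_X)*X1 + 2 = 0"
  by (rule root_rel[of "sqrt 5"]) (simp_all add: X1_def)

lemma X3_rel: "2*fps_X*X3^2 - (2 + fps_const (1 - (- sqrt 5))*fps_X)*X3 + 2 = 0"
proof (rule root_rel[of "- sqrt 5"])
  show "- sqrt 5 * - sqrt 5 = (5::real)" by simp
  have "fps_const 4 - fps_const (4 * (3 + - sqrt 5)) * fps_X - fps_const (2 * (- sqrt 5 - 3)) * fps_X ^ 2
      = fps_const 4 + fps_const (4 * (sqrt 5 - 3)) * fps_X + fps_const (2 * (3 + sqrt 5)) * (fps_X ^ 2 :: real fps)"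
    by (rule fps_ext) (simp add: algebra_simps fps_X_power_nth)
  moreover have "fps_const (1 - - sqrt 5) = fps_const (1 + sqrt 5)" by simp
  ultimately show "X3 = fps_shift 1 (fps_const 2 + fps_const (1 - - sqrt 5) * fps_X
        - fps_sqrt2 (fps_const 4 - fps_const (4 * (3 + - sqrt 5)) * fps_X
                     - fps_const (2 * (- sqrt 5 - 3)) * fps_X ^ 2)) / fps_const 4"
    by (simp only: X3_def)
qed

lemma c1: "fps_const (1 - sqrt 5) = 1 - s5" by (metis fps_const_1_eq_1 fps_const_sub)
lemma c2: "fps_const (1 - - sqrt 5) = 1 + s5" by (metis fps_const_1_eq_1 fps_const_add diff_minus_eq_add)

lemma Fs_eq: "1 + fps_X * Fs = Abs_fps (\<lambda>n. real (I_count n))"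
proof -
  have Fa: "Fs = Abs_fps (\<lambda>n. real (card (V (Suc n))))"
    unfolding Fs_def NN_def by (simp add: fps_of_nat[symmetric] zsum_const)
  show ?thesis unfolding Fa
  proof (rule fps_ext)
    fix n show "(1 + fps_X * Abs_fps (\<lambda>n. real (card (V (Suc n))))) $ n = Abs_fps (\<lambda>n. real (I_count n)) $ n"
      by (cases n) (simp_all add: I_count_V V_0)
  qed
qed

theorem mainTheorem9:
  shows "Abs_fps (\<lambda>n. real (I_count n)) =
     - (X1 * fps_X + X3 * fps_X - 1) /
       (X1 * X3 * fps_X ^ 2 - X1 * fps_X - X3 * fps_X - fps_X + 1)"
proof -
  have R1: "2*fps_X*X1^2 - (2 + (1 - s5)*fps_X)*X1 + 2 = 0" using X1_rel by (simp only: c1)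
  have R3: "2*fps_X*X3^2 - (2 + (1 + s5)*fps_X)*X3 + 2 = 0" using X3_rel by (simp only: c2)
  have K1: "(1-X1)*(fps_const (-1 - sqrt 5) + 2*fps_X*Ds) = fps_const (3 + sqrt 5)*fps_X*Fs"
    by (rule kernel_inst[OF _ X1_rel]) simp
  have K3: "(1-X3)*(fps_const (-1 - - sqrt 5) + 2*fps_X*Ds) = fps_const (3 + - sqrt 5)*fps_X*Fs"
    by (rule kernel_inst[OF _ X3_rel]) simp
  have ca: "fps_const (-1 - sqrt 5) = -1 - s5" "fps_const (-1 - - sqrt 5) = -1 + s5"
    "fps_const (3 + sqrt 5) = 3 + s5" "fps_const (3 + - sqrt 5) = 3 - s5"
    by (rule fps_ext, simp add: fps_numeral_nth)+
  define G where "G = fps_X * Fs"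
  have K1': "(1-X1)*(-1 - s5 + 2*fps_X*Ds) = (3 + s5)*G" using K1 unfolding ca G_def by (simp add: algebra_simps)
  have K3': "(1-X3)*(-1 + s5 + 2*fps_X*Ds) = (3 - s5)*G" using K3 unfolding ca G_def by (simp add: algebra_simps)
  have GB: "G*((3+s5)*(1-X3) - (3-s5)*(1-X1)) = -2*s5*(1-X1)*(1-X3)"
    by (rule GB_gen[OF K1' K3'])
  have X1c: "X1 $ 1 = (1 + sqrt 5) / 2" using coeffs_rel(2)[OF X1_rel] by simp
  have X3c: "X3 $ 1 = (1 - sqrt 5) / 2" using coeffs_rel(2)[OF X3_rel] by simp
  have Bnz: "(3+s5)*(1-X3) - (3-s5)*(1-X1) \<noteq> 0"
  proof
    assume h: "(3+s5)*(1-X3) - (3-s5)*(1-X1) = 0"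
    have "((3+s5)*(1-X3) - (3-s5)*(1-X1)) = fps_const (3 + sqrt 5)*(1-X3) - fps_const (3 - sqrt 5)*(1-X1)"
      by (simp add: fps_numeral_fps_const)
    hence h1: "(fps_const (3 + sqrt 5)*(1-X3) - fps_const (3 - sqrt 5)*(1-X1)) $ 1 = 0" using h by simp
    have "(fps_const (3 + sqrt 5)*(1-X3) - fps_const (3 - sqrt 5)*(1-X1)) $ 1
        = (3 + sqrt 5) * (- (X3 $ 1)) - (3 - sqrt 5) * (- (X1 $ 1))"
      by (simp del: One_nat_def)
    also have "\<dots> = 2 * sqrt 5" unfolding X1c X3c by (simp add: field_simps algebra_simps)
    finally show False using h1 by simp
  qed
  have main: "(1+G)*(X1*X3*fps_X^2 - X1*fps_X - X3*fps_X - fps_X + 1) = 1 - X1*fps_X - X3*fps_X"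
    by (rule final_alg[OF s5sq R1 R3 _ Bnz GB]) simp
  have Enz: "X1*X3*fps_X^2 - X1*fps_X - X3*fps_X - fps_X + 1 \<noteq> (0 :: real fps)"
  proof
    assume "X1*X3*fps_X^2 - X1*fps_X - X3*fps_X - fps_X + 1 = (0 :: real fps)"
    hence "(X1*X3*fps_X^2 - X1*fps_X - X3*fps_X - fps_X + 1) $ 0 = 0" by simp
    thus False by simp
  qed
  have "Abs_fps (\<lambda>n. real (I_count n)) = 1 + G" using Fs_eq by (simp add: G_def)
  also have "\<dots> = (1+G)*(X1*X3*fps_X^2 - X1*fps_X - X3*fps_X - fps_X + 1) / (X1*X3*fps_X^2 - X1*fps_X - X3*fps_X - fps_X + 1)"
    using Enz by simp
  also have "\<dots> = - (X1 * fps_X + X3 * fps_X - 1) / (X1 * X3 * fps_X ^ 2 - X1 * fps_X - X3 * fps_X - fps_X + 1)"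
    unfolding main by (simp add: algebra_simps)
  finally show ?thesis .
qed


end
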